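(* Let $L$ be a finite $\mathcal{L}$-lattice and let $V(\mathcal{L})\subseteq L$ be the set of values of closed formulas, i.e. of formulas containing no variables. (1) If $V(\mathcal{L})=\emptyset$, then $L$ does not have the interpolation property. (2) If $V(\mathcal{L})=L$, then $L$ has the interpolation property.
   Context: A lattice-oriented signature $\mathcal{L}$ is a finite set of connectives. Each connective $c$ has an arity $n_c\in\mathbb{N}$ and a polarity $p_c:\{1,\dots,n_c\}\to\{-,+\}$. The signature contains binary connectives $\lor,\land,\to$ with $p_\lor(1)=p_\lor(2)=p_\land(1)=p_\land(2)=+$, $p_\to(1)=-$ and $p_\to(2)=+$; nullary connectives are truth constants. A finite $\mathcal{L}$-lattice is a finite set $L$ together with an $n_c$-ary operation $c^L$ on $L$ for each connective $c$, such that: - $(L,\lor^L,\land^L)$ is a lattice, with order $x\le y$ iff $x\land y=x$; its top element is denoted $1$; - $c^L$ is monotone in every argument $i$ with $p_c(i)=+$ and antitone in every argument $i$ with $p_c(i)=-$; - for all $a,b\in L$: $1\le a\to^L b$ iff $a\le b$. Formulas (words) are built from propositional variables using the connectives. A valuation assigns elements of $L$ to the variables and extends to all formulas via the operations $c^L$. For formulas $a,b$, "$a\le b$ is valid" means that the value of $a$ is $\le$ the value of $b$ under every valuation. For a valid $a\le b$, the variables occurring only in $a$ are the left variables, those occurring only in $b$ are the right variables, and those occurring in both are the intersection variables. $L$ has the interpolation property iff for all formulas $a,b$ with $a\le b$ valid there is a formula $i$ whose variables are all intersection variables of $a,b$ such that $a\le i$ and $i\le b$ are valid. If there are no intersection variables,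 $i$ must be a closed formula. *)

theory Defs
  imports Main
begin

datatype ('c, 'v) form = Var 'v | App 'c "('c, 'v) form list"

fun vars :: "('c, 'v) form \<Rightarrow> 'v set" where
  "vars (Var x) = {x}"
| "vars (App c fs) = (\<Union>f\<in>set fs. vars f)"

fun wf_form :: "('c \<Rightarrow> nat) \<Rightarrow> ('c, 'v) form \<Rightarrow> bool" where
  "wf_form ar (Var x) = True"
| "wf_form ar (App c fs) = (length fs = ar c \<and> (\<forall>f\<in>set fs. wf_form ar f))"

fun eval :: "('c \<Rightarrow> 'a list \<Rightarrow> 'a) \<Rightarrow> ('v \<Rightarrow> 'a) \<Rightarrow> ('c, 'v) form \<Rightarrow> 'a" where
  "eval ops v (Var x) = v x"
| "eval ops v (App c fs) = ops c (map (eval ops v) fs)"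

text \<open>Lattice-oriented signature: connectives form a finite type 'c; polarity
  pol c i (i < ar c, 0-based argument index) is True for + and False for -.
  jn, mt, im are the distinguished binary connectives \<or>, \<and>, \<rightarrow>.\<close>
definition lattice_signature ::
  "('c::finite \<Rightarrow> nat) \<Rightarrow> ('c \<Rightarrow> nat \<Rightarrow> bool) \<Rightarrow> 'c \<Rightarrow> 'c \<Rightarrow> 'c \<Rightarrow> bool" where
  "lattice_signature ar pol jn mt im \<longleftrightarrow>
     distinct [jn, mt, im] \<and>
     ar jn = 2 \<and> ar mt = 2 \<and> ar im = 2 \<and>
     pol jn 0 \<and> pol jn 1 \<and> pol mt 0 \<and> pol mt 1 \<and>
     \<not> pol im 0 \<and> pol im 1"

definition lle :: "('c \<Rightarrow> 'a list \<Rightarrow> 'a) \<Rightarrow> 'c \<Rightarrow> 'a \<Rightarrow> 'a \<Rightarrow> bool" where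
  "lle ops mt x y \<longleftrightarrow> ops mt [x, y] = x"

definition ltop :: "'a set \<Rightarrow> ('c \<Rightarrow> 'a list \<Rightarrow> 'a) \<Rightarrow> 'c \<Rightarrow> 'a" where
  "ltop L ops mt = (THE t. t \<in> L \<and> (\<forall>x\<in>L. lle ops mt x t))"

definition finite_L_lattice ::
  "('c::finite \<Rightarrow> nat) \<Rightarrow> ('c \<Rightarrow> nat \<Rightarrow> bool) \<Rightarrow> 'c \<Rightarrow> 'c \<Rightarrow> 'c \<Rightarrow>
   'a set \<Rightarrow> ('c \<Rightarrow> 'a list \<Rightarrow> 'a) \<Rightarrow> bool" where
  "finite_L_lattice ar pol jn mt im L ops \<longleftrightarrow>
     finite L \<and> L \<noteq> {} \<and>
     \<comment> \<open>closure of the carrier under all operations\<close>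
     (\<forall>c xs. length xs = ar c \<and> set xs \<subseteq> L \<longrightarrow> ops c xs \<in> L) \<and>
     \<comment> \<open>(L, jn, mt) is a lattice\<close>
     (\<forall>x\<in>L. \<forall>y\<in>L. ops jn [x, y] = ops jn [y, x] \<and> ops mt [x, y] = ops mt [y, x]) \<and>
     (\<forall>x\<in>L. \<forall>y\<in>L. \<forall>z\<in>L.
        ops jn [ops jn [x, y], z] = ops jn [x, ops jn [y, z]] \<and>
        ops mt [ops mt [x, y], z] = ops mt [x, ops mt [y, z]]) \<and>
     (\<forall>x\<in>L. \<forall>y\<in>L. ops jn [x, ops mt [x, y]] = x \<and> ops mt [x, ops jn [x, y]] = x) \<and>
     \<comment> \<open>monotone in positive, antitone in negative arguments\<close>
     (\<forall>c i xs y. i < ar c \<and> length xs = ar c \<and> set xs \<subseteq> L \<and> y \<in> L \<and>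
        lle ops mt (xs ! i) y \<longrightarrow>
        (if pol c i then lle ops mt (ops c xs) (ops c (xs[i := y]))
         else lle ops mt (ops c (xs[i := y])) (ops c xs))) \<and>
     \<comment> \<open>residuation-type condition on the implication\<close>
     (\<forall>a\<in>L. \<forall>b\<in>L. lle ops mt (ltop L ops mt) (ops im [a, b]) \<longleftrightarrow> lle ops mt a b)"

definition valid_le ::
  "('c \<Rightarrow> nat) \<Rightarrow> 'c \<Rightarrow> 'a set \<Rightarrow> ('c \<Rightarrow> 'a list \<Rightarrow> 'a) \<Rightarrow>
   ('c, nat) form \<Rightarrow> ('c, nat) form \<Rightarrow> bool" where
  "valid_le ar mt L ops a b \<longleftrightarrow>
     (\<forall>v. range v \<subseteq> L \<longrightarrow> lle ops mt (eval ops v a) (eval ops v b))"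

definition interpolation_property ::
  "('c \<Rightarrow> nat) \<Rightarrow> 'c \<Rightarrow> 'a set \<Rightarrow> ('c \<Rightarrow> 'a list \<Rightarrow> 'a) \<Rightarrow> bool" where
  "interpolation_property ar mt L ops \<longleftrightarrow>
     (\<forall>a b. wf_form ar a \<and> wf_form ar b \<and> valid_le ar mt L ops a b \<longrightarrow>
        (\<exists>i. wf_form ar i \<and> vars i \<subseteq> vars a \<inter> vars b \<and>
             valid_le ar mt L ops a i \<and> valid_le ar mt L ops i b))"

text \<open>V(L): values of closed formulas (the valuation is irrelevant for closed formulas).\<close>
definition closed_values ::
  "('c \<Rightarrow> nat) \<Rightarrow> ('c \<Rightarrow> 'a list \<Rightarrow> 'a) \<Rightarrow> 'a set" where
  "closed_values ar ops =
     {eval ops (\<lambda>_. undefined) f | f :: ('c, nat) form. wf_form ar f \<and> vars f = {}}"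

end

theory Submission
  imports Defs "HOL-Library.FuncSet"
begin

fun subst :: "(nat \<Rightarrow> ('c, nat) form) \<Rightarrow> ('c, nat) form \<Rightarrow> ('c, nat) form" where
  "subst s (Var x) = s x"
| "subst s (App c fs) = App c (map (subst s) fs)"

lemma eval_subst: "eval ops v (subst s f) = eval ops (\<lambda>x. eval ops v (s x)) f"
  by (induction f) (auto cong: map_cong)

lemma vars_subst: "vars (subst s f) = (\<Union>x\<in>vars f. vars (s x))"
  by (induction f) auto

lemma wf_subst: "wf_form ar f \<Longrightarrow> (\<And>x. wf_form ar (s x)) \<Longrightarrow> wf_form ar (subst s f)"
  by (induction f) auto

lemma eval_cong: "(\<And>x. x \<in> vars f \<Longrightarrow> v x = w x) \<Longrightarrow> eval ops v f = eval ops w f"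
proof (induction f)
  case (App c fs)
  have "map (eval ops v) fs = map (eval ops w) fs"
    unfolding map_eq_conv using App by auto
  thus ?case by (metis eval.simps(2))
qed auto

lemma finite_vars: "finite (vars f)"
  by (induction f) auto

fun bigjoin :: "'c \<Rightarrow> ('c, nat) form list \<Rightarrow> ('c, nat) form" where
  "bigjoin j [] = Var 0"
| "bigjoin j [f] = f"
| "bigjoin j (f # fs) = App j [f, bigjoin j fs]"

lemma vars_bigjoin: "fs \<noteq> [] \<Longrightarrow> vars (bigjoin j fs) = (\<Union>f\<in>set fs. vars f)"
  by (induction j fs rule: bigjoin.induct) auto

lemma wf_bigjoin: "ar j = 2 \<Longrightarrow> fs \<noteq> [] \<Longrightarrow> (\<forall>f\<in>set fs. wf_form ar f) \<Longrightarrow> wf_form ar (bigjoin j fs)"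
  by (induction j fs rule: bigjoin.induct) auto

locale LL =
  fixes ar :: "'c::finite \<Rightarrow> nat" and pol :: "'c \<Rightarrow> nat \<Rightarrow> bool"
    and jn mt im :: 'c and L :: "'a set" and ops :: "'c \<Rightarrow> 'a list \<Rightarrow> 'a"
  assumes sig: "lattice_signature ar pol jn mt im"
    and lat: "finite_L_lattice ar pol jn mt im L ops"
begin

lemma ar2: "ar jn = 2" "ar mt = 2" "ar im = 2"
  using sig unfolding lattice_signature_def by auto

lemma closed: "length xs = ar c \<Longrightarrow> set xs \<subseteq> L \<Longrightarrow> ops c xs \<in> L"
  using lat unfolding finite_L_lattice_def by blast

lemma jn_in: "x \<in> L \<Longrightarrow> y \<in> L \<Longrightarrow> ops jn [x,y] \<in> L"
  using closed[of "[x,y]" jn] ar2 by auto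
lemma mt_in: "x \<in> L \<Longrightarrow> y \<in> L \<Longrightarrow> ops mt [x,y] \<in> L"
  using closed[of "[x,y]" mt] ar2 by auto
lemma im_in: "x \<in> L \<Longrightarrow> y \<in> L \<Longrightarrow> ops im [x,y] \<in> L"
  using closed[of "[x,y]" im] ar2 by auto

lemma comm: "x \<in> L \<Longrightarrow> y \<in> L \<Longrightarrow> ops jn [x, y] = ops jn [y, x] \<and> ops mt [x, y] = ops mt [y, x]"
  using lat unfolding finite_L_lattice_def by blast
lemma assoc: "x \<in> L \<Longrightarrow> y \<in> L \<Longrightarrow> z \<in> L \<Longrightarrow>
        ops jn [ops jn [x, y], z] = ops jn [x, ops jn [y, z]] \<and>
        ops mt [ops mt [x, y], z] = ops mt [x, ops mt [y, z]]"
  using lat unfolding finite_L_lattice_def by blast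
lemma absorb: "x \<in> L \<Longrightarrow> y \<in> L \<Longrightarrow> ops jn [x, ops mt [x, y]] = x \<and> ops mt [x, ops jn [x, y]] = x"
  using lat unfolding finite_L_lattice_def by blast

lemma refl: "x \<in> L \<Longrightarrow> lle ops mt x x"
proof -
  assume x: "x \<in> L"
  have "ops jn [x, ops mt [x,x]] = x" using absorb[OF x x] by blast
  moreover have "ops mt [x, ops jn [x, ops mt [x,x]]] = x" using absorb[OF x mt_in[OF x x]] by blast
  ultimately show ?thesis unfolding lle_def by simp
qed

lemma trans: "x \<in> L \<Longrightarrow> y \<in> L \<Longrightarrow> z \<in> L \<Longrightarrow> lle ops mt x y \<Longrightarrow> lle ops mt y z \<Longrightarrow> lle ops mt x z"
  unfolding lle_def by (metis assoc)

lemma antisym: "x \<in> L \<Longrightarrow> y \<in> L \<Longrightarrow> lle ops mt x y \<Longrightarrow> lle ops mt y x \<Longrightarrow> x = y"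
  unfolding lle_def by (metis comm)

lemma lle_jn: "x \<in> L \<Longrightarrow> y \<in> L \<Longrightarrow> lle ops mt x y \<longleftrightarrow> ops jn [x,y] = y"
  unfolding lle_def by (metis comm absorb)

lemma upper1: "x \<in> L \<Longrightarrow> y \<in> L \<Longrightarrow> lle ops mt x (ops jn [x,y])"
  unfolding lle_def using absorb by blast
lemma upper2: "x \<in> L \<Longrightarrow> y \<in> L \<Longrightarrow> lle ops mt y (ops jn [x,y])"
  using upper1 comm by metis

lemma lub: "x \<in> L \<Longrightarrow> y \<in> L \<Longrightarrow> b \<in> L \<Longrightarrow> lle ops mt x b \<Longrightarrow> lle ops mt y b \<Longrightarrow> lle ops mt (ops jn [x,y]) b"
proof -
  assume x: "x \<in> L" and y: "y \<in> L" and b: "b \<in> L" and xb: "lle ops mt x b" and yb: "lle ops mt y b"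
  have "ops jn [x,b] = b" "ops jn [y,b] = b" using xb yb lle_jn x y b by auto
  hence "ops jn [ops jn [x,y], b] = b" using assoc[OF x y b] by simp
  thus ?thesis using lle_jn[OF jn_in[OF x y] b] by simp
qed

lemma ub_exists: "finite S \<Longrightarrow> S \<noteq> {} \<Longrightarrow> S \<subseteq> L \<Longrightarrow> \<exists>u\<in>L. \<forall>x\<in>S. lle ops mt x u"
proof (induction S rule: finite_ne_induct)
  case (singleton x) thus ?case using refl by auto
next
  case (insert x F)
  then obtain u where u: "u \<in> L" "\<forall>y\<in>F. lle ops mt y u" by auto
  have x: "x \<in> L" using insert by auto
  show ?case
  proof (intro bexI[of _ "ops jn [x,u]"] ballI)
    fix y assume "y \<in> insert x F"
    thus "lle ops mt y (ops jn [x,u])"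
    proof
      assume "y = x" thus ?thesis using upper1 x u by simp
    next
      assume yF: "y \<in> F"
      hence "y \<in> L" using insert by auto
      thus ?thesis using trans[OF _ u(1) jn_in[OF x u(1)]] u yF upper2[OF x u(1)] by blast
    qed
  qed (use jn_in x u in auto)
qed

lemma top: "ltop L ops mt \<in> L \<and> (\<forall>x\<in>L. lle ops mt x (ltop L ops mt))"
proof -
  have fin: "finite L" "L \<noteq> {}" using lat unfolding finite_L_lattice_def by auto
  obtain t where t: "t \<in> L" "\<forall>x\<in>L. lle ops mt x t" using ub_exists[OF fin] by auto
  have "(THE t. t \<in> L \<and> (\<forall>x\<in>L. lle ops mt x t)) = t"
    by (rule the_equality) (use t antisym in auto)
  thus ?thesis unfolding ltop_def using t by simp
qed

lemma resid: "a \<in> L \<Longrightarrow> b \<in> L \<Longrightarrow> lle ops mt (ltop L ops mt) (ops im [a, b]) \<longleftrightarrow> lle ops mt a b"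
  using lat unfolding finite_L_lattice_def by blast

lemma eval_in: "range v \<subseteq> L \<Longrightarrow> wf_form ar f \<Longrightarrow> eval ops v f \<in> L"
proof (induction f)
  case (Var x) thus ?case by auto
next
  case (App c fs)
  show ?case using App by (auto intro!: closed)
qed


lemma bj_in: "fs \<noteq> [] \<Longrightarrow> \<forall>f\<in>set fs. eval ops v f \<in> L \<Longrightarrow> eval ops v (bigjoin jn fs) \<in> L"
  by (induction fs rule: induct_list012) (auto intro: jn_in)

lemma bj_upper: "f \<in> set fs \<Longrightarrow> \<forall>f\<in>set fs. eval ops v f \<in> L \<Longrightarrow> lle ops mt (eval ops v f) (eval ops v (bigjoin jn fs))"
proof (induction fs rule: induct_list012)
  case (2 g) thus ?case using refl by auto
next
  case (3 g h hs)
  have inL: "eval ops v (bigjoin jn (h # hs)) \<in> L" using 3 by (intro bj_in) auto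
  have g: "eval ops v g \<in> L" using 3 by auto
  show ?case
  proof (cases "f = g")
    case True thus ?thesis using 3 upper1[OF g inL] by simp
  next
    case False
    hence "f \<in> set (h # hs)" using 3 by auto
    hence "lle ops mt (eval ops v f) (eval ops v (bigjoin jn (h # hs)))" using 3 by auto
    moreover have "eval ops v f \<in> L" using 3 by auto
    ultimately show ?thesis using 3 trans[OF _ inL jn_in[OF g inL]] upper2[OF g inL] by auto
  qed
qed auto

lemma bj_lub: "fs \<noteq> [] \<Longrightarrow> \<forall>f\<in>set fs. eval ops v f \<in> L \<and> lle ops mt (eval ops v f) b \<Longrightarrow> b \<in> L
   \<Longrightarrow> lle ops mt (eval ops v (bigjoin jn fs)) b"
proof (induction fs rule: induct_list012)
  case (3 g h hs)
  have inL: "eval ops v (bigjoin jn (h # hs)) \<in> L" using 3 by (intro bj_in) auto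
  have "lle ops mt (eval ops v (bigjoin jn (h # hs))) b" using 3 by auto
  thus ?case using 3 lub[OF _ inL] by auto
qed auto

lemma part1: "closed_values ar ops = {} \<Longrightarrow> \<not> interpolation_property ar mt L ops"
proof
  assume cv: "closed_values ar ops = {}" and ip: "interpolation_property ar mt L ops"
  define a :: "('c, nat) form" where "a = Var 0"
  define b :: "('c, nat) form" where "b = App im [Var 1, Var 1]"
  have wa: "wf_form ar a" and wb: "wf_form ar b" using ar2 by (auto simp: a_def b_def)
  have vl: "valid_le ar mt L ops a b"
    unfolding valid_le_def
  proof (intro allI impI)
    fix v :: "nat \<Rightarrow> 'a" assume r: "range v \<subseteq> L"
    have v0: "v 0 \<in> L" and v1: "v 1 \<in> L" using r by auto
    have "lle ops mt (ltop L ops mt) (ops im [v 1, v 1])" using resid[OF v1 v1] refl[OF v1] by simp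
    moreover have "lle ops mt (v 0) (ltop L ops mt)" using top v0 by auto
    ultimately show "lle ops mt (eval ops v a) (eval ops v b)"
      unfolding a_def b_def using trans[OF v0 _ im_in[OF v1 v1]] top by auto
  qed
  have dis: "vars a \<inter> vars b = {}" by (simp add: a_def b_def)
  obtain i where "wf_form ar i" "vars i \<subseteq> vars a \<inter> vars b"
    using ip wa wb vl unfolding interpolation_property_def by blast
  hence "eval ops (\<lambda>_. undefined) i \<in> closed_values ar ops"
    unfolding closed_values_def using dis by auto
  thus False using cv by simp
qed

lemma part2: "closed_values ar ops = L \<Longrightarrow> interpolation_property ar mt L ops"
  unfolding interpolation_property_def
proof (intro allI impI)
  assume cv: "closed_values ar ops = L"
  fix a b :: "('c, nat) form"
  assume "wf_form ar a \<and> wf_form ar b \<and> valid_le ar mt L ops a b"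
  hence wa: "wf_form ar a" and wb: "wf_form ar b" and vab: "valid_le ar mt L ops a b" by auto
  define S where "S = vars a - vars b"
  define cf :: "'a \<Rightarrow> ('c, nat) form" where
    "cf e = (SOME f. wf_form ar f \<and> vars f = {} \<and> eval ops (\<lambda>_. undefined) f = e)" for e
  have cfp: "wf_form ar (cf e) \<and> vars (cf e) = {} \<and> (\<forall>v. eval ops v (cf e) = e)" if e: "e \<in> L" for e
  proof -
    have "\<exists>f::(('c, nat) form). wf_form ar f \<and> vars f = {} \<and> eval ops (\<lambda>_. undefined) f = e"
    proof -
      have "e \<in> closed_values ar ops" using cv e by simp
      thus ?thesis unfolding closed_values_def by (simp only: mem_Collect_eq) metis
    qed
    hence h: "wf_form ar (cf e) \<and> vars (cf e) = {} \<and> eval ops (\<lambda>_. undefined) (cf e) = e"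
      unfolding cf_def by (rule someI_ex)
    have "eval ops v (cf e) = e" for v
      using h eval_cong[of "cf e" v "\<lambda>_. undefined" ops] by auto
    thus ?thesis using h by auto
  qed
  define \<sigma> where "\<sigma> g x = (if x \<in> S then cf (g x) else Var x)" for g :: "nat \<Rightarrow> 'a" and x
  define G where "G = Pi\<^sub>E S (\<lambda>_. L)"
  have finS: "finite S" unfolding S_def using finite_vars by auto
  have finL: "finite L" and neL: "L \<noteq> {}" using lat unfolding finite_L_lattice_def by auto
  have finG: "finite G" unfolding G_def using finS finL by (intro finite_PiE) auto
  obtain l where l: "l \<in> L" using neL by auto
  have "(\<lambda>x. if x \<in> S then l else undefined) \<in> G" unfolding G_def using l by auto
  hence neG: "G \<noteq> {}" by auto
  obtain gs where gs: "set gs = G" using finite_list[OF finG] by auto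
  define fs where "fs = map (\<lambda>g. subst (\<sigma> g) a) gs"
  have fsne: "fs \<noteq> []" using gs neG fs_def by auto
  have wfs: "wf_form ar (\<sigma> g x)" if "g \<in> G" for g x
    using that cfp unfolding \<sigma>_def G_def by (auto simp: PiE_iff)
  have wffs: "\<forall>f\<in>set fs. wf_form ar f"
    unfolding fs_def using gs wfs wa by (auto intro!: wf_subst)
  have evalL: "\<forall>f\<in>set fs. eval ops v f \<in> L" if "range v \<subseteq> L" for v
    using wffs eval_in that by auto
  show "\<exists>i. wf_form ar i \<and> vars i \<subseteq> vars a \<inter> vars b \<and>
             valid_le ar mt L ops a i \<and> valid_le ar mt L ops i b"
  proof (intro exI conjI)
    show "wf_form ar (bigjoin jn fs)" using wf_bigjoin[OF ar2(1) fsne wffs] .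
    show "vars (bigjoin jn fs) \<subseteq> vars a \<inter> vars b"
    proof
      fix y assume "y \<in> vars (bigjoin jn fs)"
      hence "y \<in> (\<Union>f\<in>set fs. vars f)" using vars_bigjoin[OF fsne] by simp
      then obtain f where f: "f \<in> set fs" and yf: "y \<in> vars f" by blast
      then obtain g where g: "g \<in> G" and fe: "f = subst (\<sigma> g) a" using gs unfolding fs_def by auto
      from yf have "y \<in> (\<Union>x\<in>vars a. vars (\<sigma> g x))" unfolding fe vars_subst .
      then obtain x where x: "x \<in> vars a" and y: "y \<in> vars (\<sigma> g x)" by blast
      show "y \<in> vars a \<inter> vars b"
      proof (cases "x \<in> S")
        case True
        hence "g x \<in> L" using g unfolding G_def by auto
        thus ?thesis using y True cfp unfolding \<sigma>_def by auto
      next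
        case False thus ?thesis using y x unfolding \<sigma>_def S_def by auto
      qed
    qed
    show "valid_le ar mt L ops a (bigjoin jn fs)"
      unfolding valid_le_def
    proof (intro allI impI)
      fix v :: "nat \<Rightarrow> 'a" assume r: "range v \<subseteq> L"
      define g where "g = restrict v S"
      have gG: "g \<in> G" unfolding g_def G_def using r by auto
      have eqa: "eval ops v (subst (\<sigma> g) a) = eval ops v a"
        unfolding eval_subst
      proof (rule eval_cong)
        fix x assume "x \<in> vars a"
        show "eval ops v (\<sigma> g x) = v x"
        proof (cases "x \<in> S")
          case True
          hence "v x \<in> L" using r by auto
          thus ?thesis using True cfp unfolding \<sigma>_def g_def by auto
        qed (auto simp: \<sigma>_def)
      qed
      have mem: "subst (\<sigma> g) a \<in> set fs" unfolding fs_def using gs gG by auto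
      show "lle ops mt (eval ops v a) (eval ops v (bigjoin jn fs))"
        using bj_upper[OF mem evalL[OF r]] unfolding eqa .
    qed
    show "valid_le ar mt L ops (bigjoin jn fs) b"
      unfolding valid_le_def
    proof (intro allI impI)
      fix v :: "nat \<Rightarrow> 'a" assume r: "range v \<subseteq> L"
      have bL: "eval ops v b \<in> L" using eval_in r wb by auto
      have "lle ops mt (eval ops v f) (eval ops v b)" if f: "f \<in> set fs" for f
      proof -
        obtain g where g: "g \<in> G" and fe: "f = subst (\<sigma> g) a" using f gs unfolding fs_def by auto
        define w where "w x = eval ops v (\<sigma> g x)" for x
        have rw: "range w \<subseteq> L" unfolding w_def using eval_in[OF r] wfs[OF g] by auto
        have "lle ops mt (eval ops w a) (eval ops w b)" using vab rw unfolding valid_le_def by auto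
        moreover have "eval ops w b = eval ops v b"
          by (rule eval_cong) (auto simp: w_def \<sigma>_def S_def)
        moreover have "eval ops v f = eval ops w a" unfolding fe eval_subst w_def ..
        ultimately show ?thesis by simp
      qed
      thus "lle ops mt (eval ops v (bigjoin jn fs)) (eval ops v b)"
        using bj_lub[OF fsne _ bL] evalL[OF r] by blast
    qed
  qed
qed

end

theorem mainTheorem2:
  fixes ar :: "'c::finite \<Rightarrow> nat" and pol :: "'c \<Rightarrow> nat \<Rightarrow> bool"
    and jn mt im :: 'c and L :: "'a set" and ops :: "'c \<Rightarrow> 'a list \<Rightarrow> 'a"
  assumes "lattice_signature ar pol jn mt im"
    and "finite_L_lattice ar pol jn mt im L ops"
  shows "(closed_values ar ops = {} \<longrightarrow> \<not> interpolation_property ar mt L ops)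
       \<and> (closed_values ar ops = L \<longrightarrow> interpolation_property ar mt L ops)"
proof -
  interpret LL ar pol jn mt im L ops using assms by unfold_locales
  show ?thesis using part1 part2 by blast
qed

end
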